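(* Let $q$ be a power of an odd prime $p$ with $q>5$, let $3\le h\le k$ be integers, let $$D_3=\Bigl\{(x_1,\ldots,x_k)\in\mathbb{F}_q^k\setminus\{0\}:\prod_{i=1}^h x_i\prod_{1\le i<j\le h}(x_i+x_j)=0\Bigr\},$$ and $n=\#D_3$. Then the minimum nonzero weight of $\mathrm{C}_{D_3}$ is $n-q^{k-1}+1$, and it is attained exactly by the codewords associated with the hyperplanes $x_i+x_j=0$ ($1\le i<j\le h$) and $x_i=0$ ($1\le i\le h$).
   Context: For a finite ordered set $D=\{P_1,\ldots,P_n\}\subseteq\mathbb{F}_q^k$, $\mathrm{C}_D=\{c_f=(f(P_1),\ldots,f(P_n)):f:\mathbb{F}_q^k\to\mathbb{F}_q\text{ linear}\}$; the codewords associated with a hyperplane through the origin are the $c_f$ with $f$ a linear form defining it. Weights are Hamming weights. *)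

theory Defs
  imports "HOL-Computational_Algebra.Primes"
begin

text \<open>Vectors of F_q^k are modelled as functions nat => 'a vanishing outside
  the index range {0..<k} (coordinates x_1..x_k of the paper are x 0 .. x (k-1)).\<close>
definition vecs :: "nat \<Rightarrow> (nat \<Rightarrow> 'a::zero) set" where
  "vecs k = {x. \<forall>i\<ge>k. x i = 0}"

text \<open>The linear form F_q^k -> F_q with coefficient vector a
  (every linear form on F_q^k is of this shape, for a unique a in vecs k).\<close>
definition linform :: "nat \<Rightarrow> (nat \<Rightarrow> 'a::comm_ring_1) \<Rightarrow> (nat \<Rightarrow> 'a) \<Rightarrow> 'a" where
  "linform k a x = (\<Sum>i<k. a i * x i)"

definition D3 :: "nat \<Rightarrow> nat \<Rightarrow> (nat \<Rightarrow> 'a::comm_ring_1) set" where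
  "D3 k h = {x \<in> vecs k. x \<noteq> (\<lambda>_. 0) \<and>
     (\<Prod>i<h. x i) * (\<Prod>i<h. \<Prod>j\<in>{i<..<h}. (x i + x j)) = 0}"

text \<open>Hamming weight of the codeword c_f = (f(P_1),...,f(P_n)) of C_D.\<close>
definition cw_weight :: "('b \<Rightarrow> 'a::zero) \<Rightarrow> 'b set \<Rightarrow> nat" where
  "cw_weight f D = card {P \<in> D. f P \<noteq> 0}"

end

theory Submission
  imports Defs
begin


lemma vecs_Suc: "vecs (Suc k) = (\<lambda>(x,c). x(k:=c)) ` (vecs k \<times> UNIV)"
proof (rule set_eqI, rule iffI)
  fix y :: "nat \<Rightarrow> 'a" assume y: "y \<in> vecs (Suc k)"
  have "y = (\<lambda>(x,c). x(k:=c)) (y(k:=0), y k)" by auto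
  moreover have "(y(k:=0), y k) \<in> vecs k \<times> UNIV" using y by (auto simp: vecs_def)
  ultimately show "y \<in> (\<lambda>(x,c). x(k:=c)) ` (vecs k \<times> UNIV)" by blast
next
  fix y :: "nat \<Rightarrow> 'a" assume "y \<in> (\<lambda>(x,c). x(k:=c)) ` (vecs k \<times> UNIV)"
  then show "y \<in> vecs (Suc k)" by (auto simp: vecs_def)
qed

lemma inj_vecs_Suc: "inj_on (\<lambda>(x,c). x(k:=c)) (vecs k \<times> UNIV)"
proof (rule inj_onI, clarsimp)
  fix x c x' c' assume "x \<in> vecs k" "x' \<in> vecs k" and e: "x(k := c) = x'(k := c')"
  then have "c = c'" by (metis fun_upd_same)
  moreover have "x = x'"
  proof
    fix i show "x i = x' i" using e \<open>x \<in> vecs k\<close> \<open>x' \<in> vecs k\<close>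
      by (cases "i = k") (auto simp: vecs_def fun_eq_iff split: if_splits)
  qed
  ultimately show "x = x' \<and> c = c'" by simp
qed

lemma vecs_fin_card: "finite (vecs k :: (nat \<Rightarrow> 'a::{zero,finite}) set) \<and> card (vecs k :: (nat \<Rightarrow> 'a) set) = card (UNIV::'a set) ^ k"
proof (induction k)
  case 0
  have "vecs 0 = {(\<lambda>_. 0) :: nat \<Rightarrow> 'a}" by (auto simp: vecs_def)
  then show ?case by simp
next
  case (Suc k)
  then show ?case
    by (simp add: vecs_Suc card_image[OF inj_vecs_Suc] card_cartesian_product)
qed

lemma finite_vecs[simp]: "finite (vecs k :: (nat \<Rightarrow> 'a::{zero,finite}) set)"
  using vecs_fin_card by blast

lemma card_vecs: "card (vecs k :: (nat \<Rightarrow> 'a::{zero,finite}) set) = card (UNIV::'a set) ^ k"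
  using vecs_fin_card by blast

lemma linform_add: "linform k a (\<lambda>i. x i + c * v i) = linform k a x + c * linform k a v"
  by (simp add: linform_def sum.distrib sum_distrib_left algebra_simps)

lemma linform_diff: "linform k a (\<lambda>i. x i - c * v i) = linform k a x - c * linform k a v"
  by (simp add: linform_def sum_subtractf sum_distrib_left algebra_simps)

lemma card_kernel:
  fixes a :: "nat \<Rightarrow> 'a::{field,finite}"
  assumes t: "t < k" "a t \<noteq> 0"
  shows "card {x \<in> vecs k. linform k a x = 0} = card (UNIV::'a set) ^ (k - 1)"
proof -
  define v where "v = (\<lambda>i. if i = t then 1 / a t else (0::'a))"
  have v: "v \<in> vecs k" using t by (auto simp: v_def vecs_def)
  have lv: "linform k a v = 1"
  proof -
    have "linform k a v = (\<Sum>i<k. if i = t then a i * (1 / a t) else 0)"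
      unfolding linform_def v_def by (rule sum.cong) auto
    also have "\<dots> = 1" using t by (simp add: sum.delta)
    finally show ?thesis .
  qed
  define F where "F c = {x \<in> vecs k. linform k a x = c}" for c
  have bij: "bij_betw (\<lambda>x i. x i + c * v i) (F 0) (F c)" for c
  proof (rule bij_betw_byWitness[where f' = "\<lambda>x i. x i + (- c) * v i"])
    show "\<forall>x\<in>F 0. (\<lambda>i. (x i + c * v i) + - c * v i) = x" by auto
    show "\<forall>x\<in>F c. (\<lambda>i. (x i + - c * v i) + c * v i) = x" by auto
    show "(\<lambda>x i. x i + c * v i) ` F 0 \<subseteq> F c"
      using v by (auto simp: F_def linform_add lv vecs_def)
    show "(\<lambda>x i. x i + - c * v i) ` F c \<subseteq> F 0"
      using v by (auto simp: F_def linform_add linform_diff lv vecs_def)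
  qed
  have cF: "card (F c) = card (F 0)" for c using bij_betw_same_card[OF bij, of c] by simp
  have "vecs k = (\<Union>c\<in>UNIV. F c)" by (auto simp: F_def)
  then have "card (vecs k :: (nat \<Rightarrow> 'a) set) = (\<Sum>c\<in>UNIV. card (F c))"
    by (simp only:) (rule card_UN_disjoint, auto simp: F_def)
  also have "\<dots> = (\<Sum>c\<in>(UNIV::'a set). card (F 0))" by (rule sum.cong[OF refl cF])
  finally have "card (UNIV::'a set) ^ k = card (UNIV::'a set) * card (F 0)" by (simp add: card_vecs)
  moreover have "card (UNIV::'a set) ^ k = card (UNIV::'a set) * card (UNIV::'a set) ^ (k - 1)" using t
    by (cases k) auto
  ultimately show ?thesis unfolding F_def by simp
qed

lemma even_invol:
  assumes "finite S" "\<forall>x\<in>S. f x \<in> S \<and> f x \<noteq> x \<and> f (f x) = x"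
  shows "even (card S)"
  using assms
proof (induction "card S" arbitrary: S rule: less_induct)
  case less
  show ?case
  proof (cases "S = {}")
    case True then show ?thesis by simp
  next
    case False
    then obtain x where x: "x \<in> S" by blast
    define S' where "S' = S - {x, f x}"
    have "\<forall>y\<in>S'. f y \<in> S' \<and> f y \<noteq> y \<and> f (f y) = y"
    proof
      fix y assume y: "y \<in> S'"
      then have yS: "y \<in> S" "y \<noteq> x" "y \<noteq> f x" by (auto simp: S'_def)
      have P: "\<And>z. z \<in> S \<Longrightarrow> f z \<in> S \<and> f z \<noteq> z \<and> f (f z) = z" using less.prems(2) by blast
      have "f y \<noteq> x" using P[OF yS(1)] yS(3) by metis
      moreover have "f y \<noteq> f x" using P[OF yS(1)] P[OF x] yS(2) by metis
      ultimately show "f y \<in> S' \<and> f y \<noteq> y \<and> f (f y) = y" using P[OF yS(1)] by (auto simp: S'_def)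
    qed
    moreover have c: "card S = card S' + 2"
    proof -
      have "f x \<in> S" "f x \<noteq> x" using less.prems x by auto
      then have "card (S - {x, f x}) = card S - 2"
        using x less.prems(1) by (simp add: card_Diff_subset)
      moreover have "card S \<ge> 2"
        using \<open>f x \<in> S\<close> \<open>f x \<noteq> x\<close> x less.prems(1)
        using card_mono[of S "{x, f x}"] by simp
      ultimately show ?thesis unfolding S'_def by simp
    qed
    ultimately have "even (card S')" using less by (simp add: S'_def)
    then show ?thesis using c by simp
  qed
qed

lemma two_ne_zero_field:
  assumes "odd (card (UNIV::'a::{field,finite} set))"
  shows "(1::'a) + 1 \<noteq> 0"
proof
  assume h: "(1::'a) + 1 = 0"
  have "even (card (UNIV::'a set))"
  proof (rule even_invol[where f = "\<lambda>x. x + 1"])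
    show "\<forall>x\<in>UNIV. x + 1 \<in> UNIV \<and> x + 1 \<noteq> x \<and> x + 1 + 1 = (x::'a)"
      using h by (simp add: add.assoc)
  qed simp
  then show False using assms by simp
qed



definition good :: "nat \<Rightarrow> (nat \<Rightarrow> 'a::comm_ring_1) \<Rightarrow> bool" where
  "good h x = ((\<forall>i<h. x i \<noteq> 0) \<and> (\<forall>i j. i < j \<and> j < h \<longrightarrow> x i + x j \<noteq> 0))"

lemma avoid6:
  assumes "card (UNIV::'a set) \<ge> 7" "E \<subseteq> set l" "length l \<le> 6"
  shows "\<exists>y::'a. y \<notin> E"
proof (rule ccontr)
  assume "\<not> ?thesis"
  then have "E = UNIV" by auto
  then have "card (UNIV::'a set) \<le> card (set l)"
    using assms(2) by (metis card_mono finite_set top.extremum_uniqueI)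
  also have "\<dots> \<le> 6" using card_length assms(3) le_trans by blast
  finally show False using assms(1) by simp
qed

lemma zc_lem: "(p::'a::field) \<noteq> 0 \<Longrightarrow> r \<noteq> 0 \<Longrightarrow> (-(A + r * y)/p = c) \<longleftrightarrow> y = (-c*p - A)/r"
  by (simp add: divide_eq_eq eq_divide_eq) (auto simp: algebra_simps eq_neg_iff_add_eq_0 neg_eq_iff_add_eq_0)
lemma zy_lem: "(p::'a::field) \<noteq> 0 \<Longrightarrow> (-(A + r * y)/p = -y) \<longleftrightarrow> (p - r) * y = A"
  by (simp add: divide_eq_eq eq_divide_eq) (auto simp: algebra_simps eq_neg_iff_add_eq_0 neg_eq_iff_add_eq_0)
lemma nz_lem: fixes d y z :: "'a::field" assumes "(1::'a) + 1 \<noteq> 0" "d \<noteq> 0" "y \<noteq> -1" "y \<noteq> -d" "z \<noteq> -1" "z \<noteq> -d" "z \<noteq> -y" "d + 1 \<noteq> 0"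
  shows  "d + d \<noteq> 0" "1 + d \<noteq> 0" 
    "y + 1 \<noteq> 0" "1 + y \<noteq> 0" "y + d \<noteq> 0" "d + y \<noteq> 0"
    "z + 1 \<noteq> 0" "1 + z \<noteq> 0" "z + d \<noteq> 0" "d + z \<noteq> 0"
    "y + z \<noteq> 0" "z + y \<noteq> 0"
  using assms
  by (auto simp: add_eq_0_iff add.commute)

lemma core:
  fixes a b :: "nat \<Rightarrow> 'a::{field,finite}"
  assumes q7: "card (UNIV::'a set) \<ge> 7" and two: "(1::'a) + 1 \<noteq> 0"
    and tu: "t < h" "u < h" "t \<noteq> u" "h \<le> k" and at: "a t \<noteq> 0" and au: "a u \<noteq> 0"
    and b: "b \<in> vecs k" "\<forall>i<h. b i = 1 \<or> b i = d" and d: "d \<noteq> 0" "d + 1 \<noteq> 0"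
    and A_def: "A = (\<Sum>i\<in>{..<k}-{t,u}. a i * b i)"
    and c1: "d = 1 \<or> a t = a u" and c2: "\<not> (a t = a u \<and> A = 0)"
  shows "\<exists>x\<in>vecs k. linform k a x = 0 \<and> good h x"
proof -
  define z where "z y = - (A + a u * y) / a t" for y
  have zc: "z y = c \<longleftrightarrow> y = (- c * a t - A) / a u" for y c
    using at au unfolding z_def by (rule zc_lem)
  have zy: "z y = - y \<longleftrightarrow> (a t - a u) * y = A" for y
    using at unfolding z_def by (rule zy_lem)
  define E where "E = {0, -1, -d, (- 0 * a t - A) / a u, (- (-1) * a t - A) / a u,
     (- (-d) * a t - A) / a u, A / (a t - a u)}"
  have "\<exists>l. E \<subseteq> set l \<and> length l \<le> 6"
  proof (cases "d = 1")
    case True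
    then show ?thesis unfolding E_def
      by (intro exI[of _ "[0, -1, (- 0 * a t - A) / a u, (- (-1) * a t - A) / a u,
     (- (-d) * a t - A) / a u, A / (a t - a u)]"]) auto
  next
    case False
    then have "a t = a u" using c1 by simp
    then show ?thesis unfolding E_def
      by (intro exI[of _ "[0, -1, -d, (- 0 * a t - A) / a u, (- (-1) * a t - A) / a u,
     (- (-d) * a t - A) / a u]"]) auto
  qed
  then obtain y where y: "y \<notin> E" using avoid6[OF q7] by blast
  have y1: "y \<noteq> 0" "y \<noteq> -1" "y \<noteq> -d" using y by (auto simp: E_def)
  have z1: "z y \<noteq> 0" "z y \<noteq> -1" "z y \<noteq> -d" using y by (auto simp: E_def zc simp del: mult_minus_left)
  have z2: "z y \<noteq> - y"
  proof
    assume "z y = - y"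
    then have e: "(a t - a u) * y = A" using zy by simp
    show False
    proof (cases "a t = a u")
      case True then show False using e c2 by simp
    next
      case False
      then have "y = A / (a t - a u)" using e by (auto simp: field_simps)
      then show False using y by (simp add: E_def)
    qed
  qed
  define x where "x = b(u := y, t := z y)"
  have xv: "x \<in> vecs k" using b tu by (auto simp: x_def vecs_def)
  have lin: "linform k a x = 0"
  proof -
    have tk: "t \<in> {..<k}" and uk: "u \<in> {..<k} - {t}" using tu by auto
    have "linform k a x = a t * x t + (\<Sum>i\<in>{..<k}-{t}. a i * x i)"
      unfolding linform_def using sum.remove[OF _ tk] by simp
    also have "(\<Sum>i\<in>{..<k}-{t}. a i * x i) = a u * x u + (\<Sum>i\<in>{..<k}-{t}-{u}. a i * x i)"
      using sum.remove[OF _ uk] by simp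
    also have "(\<Sum>i\<in>{..<k}-{t}-{u}. a i * x i) = A"
      unfolding A_def by (rule sum.cong) (auto simp: x_def)
    finally have L: "linform k a x = a t * x t + (a u * x u + A)" .
    have "x t = z y" "x u = y" using tu by (auto simp: x_def)
    then show ?thesis using L at by (simp add: z_def)
  qed
  note nz = nz_lem[OF two d(1) y1(2,3) z1(2,3) z2 d(2)] two d(2)
  have "good h x"
    unfolding good_def
  proof (intro conjI allI impI)
    fix i assume "i < h"
    then show "x i \<noteq> 0" using b d y1 z1 by (auto simp: x_def)
  next
    fix i j assume ij: "i < j \<and> j < h"
    have xt: "x t = z y" and xu: "x u = y" using tu by (auto simp: x_def)
    have xo: "x i = 1 \<or> x i = d" if "i < h" "i \<noteq> t" "i \<noteq> u" for i
      using b that by (auto simp: x_def)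
    have ih: "i < h" using ij by simp
    show "x i + x j \<noteq> 0"
    proof (cases "i = t")
      case True
      then have "j \<noteq> t" using ij by simp
      then show ?thesis using True xt xu xo[of j] ij nz by (cases "j = u") auto
    next
      case it: False
      show ?thesis
      proof (cases "i = u")
        case True
        then have "j \<noteq> u" using ij by simp
        then show ?thesis using True xt xu xo[of j] ij nz by (cases "j = t") auto
      next
        case iu: False
        then show ?thesis using it xt xu xo[of j] xo[of i] ij ih nz by (cases "j = t"; cases "j = u") auto
      qed
    qed
  qed
  then show ?thesis using xv lin by blast
qed



lemma lin_single:
  assumes "t < k" "\<forall>i. i \<noteq> t \<longrightarrow> a i = 0"
  shows "linform k a x = a t * x t"
proof -
  have "linform k a x = (\<Sum>i<k. if i = t then a t * x t else 0)"
    unfolding linform_def using assms(2) by (intro sum.cong) auto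
  then show ?thesis using assms(1) by simp
qed

lemma lin_two:
  assumes "t < k" "u < k" "t \<noteq> u" "\<forall>i. i \<noteq> t \<and> i \<noteq> u \<longrightarrow> a i = 0"
  shows "linform k a x = a t * x t + a u * x u"
proof -
  have "linform k a x = (\<Sum>i<k. (if i = t then a t * x t else 0) + (if i = u then a u * x u else 0))"
    unfolding linform_def using assms(3,4) by (intro sum.cong) auto
  then show ?thesis using assms(1,2) by (simp add: sum.distrib)
qed

lemma caseA:
  fixes a :: "nat \<Rightarrow> 'a::field"
  assumes "h \<le> t" "t < k" "a t \<noteq> 0" and two: "(1::'a) + 1 \<noteq> 0"
  shows "\<exists>x\<in>vecs k. linform k a x = 0 \<and> good h x"
proof -
  define b :: "nat \<Rightarrow> 'a" where "b = (\<lambda>i. if i < k then 1 else 0)"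
  define A where "A = (\<Sum>i\<in>{..<k}-{t}. a i * b i)"
  define x where "x = b(t := - A / a t)"
  have tk: "t \<in> {..<k}" using assms by simp
  have "linform k a x = a t * x t + (\<Sum>i\<in>{..<k}-{t}. a i * x i)"
    unfolding linform_def using sum.remove[OF _ tk] by simp
  also have "(\<Sum>i\<in>{..<k}-{t}. a i * x i) = A"
    unfolding A_def by (rule sum.cong) (auto simp: x_def)
  finally have L: "linform k a x = a t * x t + A" .
  have "x t = - A / a t" by (simp add: x_def)
  then have "linform k a x = 0" using L assms by simp
  moreover have "x \<in> vecs k" using assms by (auto simp: x_def b_def vecs_def)
  moreover have "good h x" using assms two by (auto simp: good_def x_def b_def)
  ultimately show ?thesis by blast
qed

lemma exist_good:
  fixes a :: "nat \<Rightarrow> 'a::{field,finite}"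
  assumes q7: "card (UNIV::'a set) \<ge> 7" and two: "(1::'a) + 1 \<noteq> 0" and hk: "h \<le> k"
    and av: "a \<in> vecs k" and t0: "a t0 \<noteq> 0"
    and nh1: "\<not> (\<exists>i j. i < j \<and> j < h \<and>
                {x \<in> vecs k. linform k a x = 0} = {x \<in> vecs k. x i + x j = 0})"
    and nh2: "\<not> (\<exists>i < h. {x \<in> vecs k. linform k a x = 0} = {x \<in> vecs k. x i = 0})"
  shows "\<exists>x\<in>vecs k. linform k a x = 0 \<and> good h x"
proof (cases "\<exists>t. h \<le> t \<and> t < k \<and> a t \<noteq> 0")
  case True
  then show ?thesis using caseA two by blast
next
  case False
  then have sup: "a i = 0" if "\<not> i < h" for i
    using av that by (auto simp: vecs_def) (metis not_le)
  have t: "t0 < h" using sup t0 by blast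
  show ?thesis
  proof (cases "\<forall>i. i \<noteq> t0 \<longrightarrow> a i = 0")
    case True
    then have "linform k a x = a t0 * x t0" for x using lin_single[of t0 k a] t hk by simp
    then have "{x \<in> vecs k. linform k a x = 0} = {x \<in> vecs k. x t0 = 0}" using t0 by auto
    then show ?thesis using nh2 t by blast
  next
    case False
    then obtain u where u: "u \<noteq> t0" "a u \<noteq> 0" by blast
    then have uh: "u < h" using sup by blast
    define b :: "nat \<Rightarrow> 'a" where "b = (\<lambda>i. if i < h then 1 else 0)"
    define A where "A = (\<Sum>i\<in>{..<k}-{t0,u}. a i * b i)"
    have bv: "b \<in> vecs k" using hk by (auto simp: b_def vecs_def)
    show ?thesis
    proof (cases "a t0 = a u \<and> A = 0")
      case False
      show ?thesis
        by (rule core[OF q7 two t uh u(1)[symmetric] hk t0 u(2) bv, of 1 A])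
           (use False two[unfolded one_add_one] in \<open>auto simp: b_def A_def\<close>)
    next
      case True
      show ?thesis
      proof (cases "\<forall>i. i \<noteq> t0 \<and> i \<noteq> u \<longrightarrow> a i = 0")
        case True2: True
        have "linform k a x = a t0 * (x t0 + x u)" for x
          using lin_two[of t0 k u a x] t uh hk u True True2 by (simp add: distrib_left)
        then have K: "{x \<in> vecs k. linform k a x = 0} = {x \<in> vecs k. x t0 + x u = 0}" using t0 by auto
        show ?thesis
        proof (cases "t0 < u")
          case True
          then show ?thesis using nh1 K uh by blast
        next
          case False
          then have "u < t0" using u by simp
          moreover have "{x \<in> vecs k. x t0 + x u = (0::'a)} = {x \<in> vecs k. x u + x t0 = 0}"
            by (auto simp: add.commute)
          ultimately show ?thesis using nh1 K t by blast
        qed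
      next
        case False
        then obtain w where w: "w \<noteq> t0" "w \<noteq> u" "a w \<noteq> 0" by blast
        then have wh: "w < h" using sup by blast
        obtain d :: 'a where d: "d \<notin> {0, 1, -1}"
          using avoid6[OF q7, of "{0, 1, -1}" "[0, 1, -1]"] by auto
        define b' where "b' = b(w := d)"
        define A' where "A' = (\<Sum>i\<in>{..<k}-{t0,u}. a i * b' i)"
        have wS: "w \<in> {..<k}-{t0,u}" using w wh hk by auto
        have "A' = a w * b' w + (\<Sum>i\<in>{..<k}-{t0,u}-{w}. a i * b' i)"
          unfolding A'_def by (rule sum.remove[OF _ wS]) simp
        moreover have "b' w = d" by (simp add: b'_def)
        moreover have "A = a w * b w + (\<Sum>i\<in>{..<k}-{t0,u}-{w}. a i * b i)"
          unfolding A_def by (rule sum.remove[OF _ wS]) simp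
        moreover have "b w = 1" using wh by (simp add: b_def)
        moreover have "(\<Sum>i\<in>{..<k}-{t0,u}-{w}. a i * b' i) = (\<Sum>i\<in>{..<k}-{t0,u}-{w}. a i * b i)"
          by (rule sum.cong) (auto simp: b'_def)
        ultimately have "A' = a w * (d - 1)" using True by (simp add: algebra_simps)
        then have A'0: "A' \<noteq> 0" using w d by simp
        have b'v: "b' \<in> vecs k" using bv wh hk by (auto simp: b'_def vecs_def)
        have d1: "d \<noteq> 0" "d + 1 \<noteq> 0" using d
          by (simp, metis add_eq_0_iff add.commute insertCI)
        show ?thesis
          by (rule core[OF q7 two t uh u(1)[symmetric] hk t0 u(2) b'v, of d A' ])
             (use True A'0 d1 in \<open>auto simp: b_def b'_def A'_def\<close>)
      qed
    qed
  qed
qed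



definition Uset :: "nat \<Rightarrow> nat \<Rightarrow> (nat \<Rightarrow> 'a::comm_ring_1) set" where
  "Uset k h = {x \<in> vecs k. (\<Prod>i<h. x i) * (\<Prod>i<h. \<Prod>j\<in>{i<..<h}. (x i + x j)) = 0}"

lemma D3_Uset: "D3 k h = Uset k h - {\<lambda>_. 0}"
  by (auto simp: D3_def Uset_def)

lemma Hi_sub: "i < h \<Longrightarrow> {x \<in> vecs k. x i = (0::'a::{field,finite})} \<subseteq> Uset k h"
  by (auto simp: Uset_def prod_zero_iff)

lemma Hij_sub: assumes "i < j" "j < h"
  shows "{x \<in> vecs k. x i + x j = (0::'a::{field,finite})} \<subseteq> Uset k h"
proof
  fix x :: "nat \<Rightarrow> 'a" assume x: "x \<in> {x \<in> vecs k. x i + x j = 0}"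
  have "(\<Prod>j'\<in>{i<..<h}. (x i + x j')) = 0"
    using x assms by (subst prod_zero_iff) auto
  then have "(\<Prod>i<h. \<Prod>j\<in>{i<..<h}. (x i + x j)) = 0"
    using assms by (subst prod_zero_iff) auto
  then show "x \<in> Uset k h" using x by (simp add: Uset_def)
qed

lemma good_notin: "good h (x::nat \<Rightarrow> 'a::field) \<Longrightarrow> x \<notin> Uset k h"
  by (auto simp: Uset_def good_def prod_zero_iff)

lemma card_Hi:
  assumes "i < k"
  shows "card {x \<in> vecs k. x i = (0::'a::{field,finite})} = card (UNIV::'a set) ^ (k - 1)"
proof -
  define e :: "nat \<Rightarrow> 'a" where "e = (\<lambda>j. if j = i then 1 else 0)"
  have "linform k e x = x i" for x using lin_single[of i k e x] assms by (simp add: e_def)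
  then have "{x \<in> vecs k. x i = 0} = {x \<in> vecs k. linform k e x = 0}" by simp
  also have "card \<dots> = card (UNIV::'a set) ^ (k - 1)" using assms by (intro card_kernel) (auto simp: e_def)
  finally show ?thesis .
qed

lemma card_Hij:
  assumes "i < j" "j < k"
  shows "card {x \<in> vecs k. x i + x j = (0::'a::{field,finite})} = card (UNIV::'a set) ^ (k - 1)"
proof -
  define e :: "nat \<Rightarrow> 'a" where "e = (\<lambda>l. if l = i \<or> l = j then 1 else 0)"
  have "linform k e x = x i + x j" for x using lin_two[of i k j e x] assms by (simp add: e_def)
  then have "{x \<in> vecs k. x i + x j = 0} = {x \<in> vecs k. linform k e x = 0}" by simp
  also have "card \<dots> = card (UNIV::'a set) ^ (k - 1)" using assms by (intro card_kernel[of i]) (auto simp: e_def)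
  finally show ?thesis .
qed

lemma weight_eq:
  fixes a :: "nat \<Rightarrow> 'a::{field,finite}"
  assumes "0 < h"
  shows "int (cw_weight (linform k a) (D3 k h :: (nat \<Rightarrow> 'a) set))
    = int (card (D3 k h :: (nat \<Rightarrow> 'a) set)) - int (card (Uset k h \<inter> {x \<in> vecs k. linform k a x = 0})) + 1"
proof -
  define K where "K = {x \<in> vecs k. linform k a x = (0::'a)}"
  define U where "U = (Uset k h :: (nat \<Rightarrow> 'a) set)"
  have z: "(\<lambda>_. 0) \<in> U \<inter> K"
    using assms by (auto simp: U_def K_def Uset_def vecs_def linform_def prod_zero_iff)
  have fU: "finite U" by (auto simp: U_def Uset_def)
  define D where "D = (D3 k h :: (nat \<Rightarrow> 'a) set)"
  have DU: "D = U - {\<lambda>_. 0}" by (simp add: D3_Uset U_def D_def)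
  have "{P \<in> D. linform k a P \<noteq> 0} = D - (U \<inter> K)" by (auto simp: DU K_def U_def Uset_def)
  then have "cw_weight (linform k a) D = card (D - (U \<inter> K))" by (simp add: cw_weight_def)
  also have "\<dots> = card D - card (D \<inter> (U \<inter> K))"
    by (rule card_Diff_subset_Int) (use fU in \<open>simp add: DU\<close>)
  also have "D \<inter> (U \<inter> K) = (U \<inter> K) - {\<lambda>_. 0}" by (auto simp: DU)
  finally have w: "cw_weight (linform k a) D = card D - card ((U \<inter> K) - {\<lambda>_. 0})" .
  have c1: "card ((U \<inter> K) - {\<lambda>_. 0}) + 1 = card (U \<inter> K)"
    using z fU by (metis Int_iff card_Diff1_less card_Diff_singleton card.remove finite_Int Suc_eq_plus1)
  have c2: "card ((U \<inter> K) - {\<lambda>_. 0}) \<le> card D"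
    using fU by (intro card_mono) (auto simp: DU)
  show ?thesis using w c1 c2 unfolding U_def K_def D_def by linarith
qed

theorem proposition4p2:
  fixes p m k h :: nat
  assumes "prime p" and "odd p" and "card (UNIV :: 'a set) = p ^ m"
    and "card (UNIV :: 'a set) > 5"
    and "3 \<le> h" and "h \<le> k"
  shows "Min {int (cw_weight (linform k a) (D3 k h :: (nat \<Rightarrow> 'a::{field,finite}) set)) | a.
              a \<in> vecs k \<and> cw_weight (linform k a) (D3 k h :: (nat \<Rightarrow> 'a::{field,finite}) set) \<noteq> 0}
           = int (card (D3 k h :: (nat \<Rightarrow> 'a::{field,finite}) set)) - int (card (UNIV :: 'a set)) ^ (k - 1) + 1
       \<and> (\<forall>a \<in> (vecs k :: (nat \<Rightarrow> 'a) set).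
            int (cw_weight (linform k a) (D3 k h :: (nat \<Rightarrow> 'a::{field,finite}) set))
              = int (card (D3 k h :: (nat \<Rightarrow> 'a::{field,finite}) set)) - int (card (UNIV :: 'a set)) ^ (k - 1) + 1
            \<longleftrightarrow>
            ((\<exists>i j. i < j \<and> j < h \<and>
                {x \<in> vecs k. linform k a x = 0} = {x \<in> vecs k. x i + x j = 0})
             \<or> (\<exists>i < h. {x \<in> vecs k. linform k a x = 0} = {x \<in> vecs k. x i = 0})))"
proof -
  have oddq: "odd (card (UNIV::'a set))" using assms(2,3) by simp
  have q7: "card (UNIV::'a set) \<ge> 7" using oddq assms(4) by presburger
  have two: "(1::'a) + 1 \<noteq> 0" using two_ne_zero_field oddq by blast
  define n where "n = int (card (D3 k h :: (nat \<Rightarrow> 'a) set))"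
  define val where "val = n - int (card (UNIV::'a set)) ^ (k - 1) + 1"
  define w where "w a = int (cw_weight (linform k a) (D3 k h :: (nat \<Rightarrow> 'a) set))" for a
  define hyp where "hyp a \<longleftrightarrow> ((\<exists>i j. i < j \<and> j < h \<and>
                {x \<in> vecs k. linform k a x = 0} = {x \<in> vecs k. x i + x j = 0})
             \<or> (\<exists>i < h. {x \<in> vecs k. linform k a x = 0} = {x \<in> vecs k. x i = 0}))" for a :: "nat \<Rightarrow> 'a"
  have h0: "0 < h" using assms by simp
  have W1: "w a = val" if "hyp a" for a
  proof -
    define K where "K = {x \<in> vecs k. linform k a x = (0::'a)}"
    from that consider (1) i j where "i < j" "j < h" "K = {x \<in> vecs k. x i + x j = 0}"
      | (2) i where "i < h" "K = {x \<in> vecs k. x i = 0}"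
      unfolding hyp_def K_def by blast
    then have "Uset k h \<inter> K = K \<and> card K = card (UNIV::'a set) ^ (k - 1)"
    proof cases
      case 1
      then show ?thesis using Hij_sub[OF 1(1,2), of k] card_Hij[OF 1(1), of k] assms(6) by auto
    next
      case 2
      then show ?thesis using Hi_sub[OF 2(1), of k] card_Hi[of i k] assms(6) by auto
    qed
    then show ?thesis using weight_eq[OF h0, of k a]
      unfolding w_def val_def n_def K_def by simp
  qed
  have W2: "w a \<ge> val + 1" if a: "a \<in> vecs k" "a t \<noteq> 0" "\<not> hyp a" for a t
  proof -
    define K where "K = {x \<in> vecs k. linform k a x = (0::'a)}"
    obtain x where x: "x \<in> vecs k" "linform k a x = 0" "good h x"
      using exist_good[OF q7 two assms(6) a(1,2)] a(3) unfolding hyp_def by blast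
    have tk: "t < k"
    proof (rule ccontr)
      assume "\<not> t < k"
      then have "a t = 0" using a(1) by (simp add: vecs_def)
      then show False using a(2) by simp
    qed
    have ck: "card K = card (UNIV::'a set) ^ (k - 1)" unfolding K_def by (rule card_kernel[of t k a, OF tk a(2)])
    have "x \<in> K" "x \<notin> Uset k h" using x good_notin[OF x(3), of k] unfolding K_def by auto
    then have "Uset k h \<inter> K \<subset> K" by blast
    then have "card (Uset k h \<inter> K) < card K"
      by (intro psubset_card_mono) (auto simp: K_def)
    then have "int (card (Uset k h \<inter> K)) < int (card K)" by simp
    also have "int (card K) = int (card (UNIV::'a set)) ^ (k - 1)" using ck by simp
    finally have "int (card (Uset k h \<inter> K)) < int (card (UNIV::'a set)) ^ (k - 1)" .
    then show ?thesis using weight_eq[OF h0, of k a]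
      unfolding w_def val_def n_def K_def by linarith
  qed
  have W0: "w (\<lambda>_. 0) = 0" by (simp add: w_def cw_weight_def linform_def)
  define e0 where "e0 = (\<lambda>j::nat. if j = 0 then 1 else (0::'a))"
  have e0v: "e0 \<in> vecs k" using assms by (auto simp: e0_def vecs_def)
  have le0: "linform k e0 x = x 0" for x using lin_single[of 0 k e0 x] assms by (simp add: e0_def)
  have hyp0: "hyp e0" unfolding hyp_def using le0 h0 by auto
  have "e0 \<in> {P \<in> D3 k h. linform k e0 P \<noteq> 0}"
  proof -
    have "(\<Prod>i<h. e0 i) = 0" using assms by (subst prod_zero_iff) (auto simp: e0_def intro!: bexI[of _ 1])
    then show ?thesis using e0v le0 by (auto simp: D3_def e0_def fun_eq_iff)
  qed
  moreover have "finite {P \<in> D3 k h. linform k e0 P \<noteq> 0}"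
    by (rule finite_subset[of _ "vecs k"]) (auto simp: D3_def)
  ultimately have "cw_weight (linform k e0) (D3 k h) > 0"
    unfolding cw_weight_def by (simp add: card_gt_0_iff) blast
  then have val1: "val \<ge> 1" using W1[OF hyp0] unfolding w_def by simp
  have iff: "w a = val \<longleftrightarrow> hyp a" if av: "a \<in> vecs k" for a
  proof
    assume wa: "w a = val"
    show "hyp a"
    proof (cases "\<exists>t. a t \<noteq> 0")
      case True
      then obtain t where "a t \<noteq> 0" by blast
      then show ?thesis using W2[OF av] wa by fastforce
    next
      case False
      then have "a = (\<lambda>_. 0)" by auto
      then show ?thesis using W0 wa val1 by simp
    qed
  qed (rule W1)
  define S where "S = {w a | a. a \<in> vecs k \<and> w a \<noteq> 0}"
  have "Min S = val"
  proof (rule Min_eqI)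
    have "S \<subseteq> w ` vecs k" unfolding S_def by blast
    then show "finite S" by (rule finite_subset) simp
    show "val \<in> S" unfolding S_def using W1[OF hyp0] e0v val1 by force
    fix y assume "y \<in> S"
    then obtain a where a: "a \<in> vecs k" "w a \<noteq> 0" "y = w a" unfolding S_def by blast
    show "val \<le> y"
    proof (cases "hyp a")
      case True then show ?thesis using W1 a by simp
    next
      case False
      have "\<exists>t. a t \<noteq> 0" using a(2) W0 by (metis ext)
      then show ?thesis using W2[OF a(1) _ False] a(3) by fastforce
    qed
  qed
  then show ?thesis using iff unfolding S_def w_def val_def n_def hyp_def by simp
qed

end
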